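(* Let $K\ge1$ and $m$ be positive integers, and for $k=1,\dots,K$ fix $\sigma_k^2>0$, $\lambda_k\in[0,1)$ and $\theta_k>0$ with $\sum_k\theta_k=1$. For $\gamma>0$ set $\Omega_k=\frac{\gamma\theta_k\sigma_k^2(1-\lambda_k^2)}{m}$, and for $\boldsymbol\ell=(\ell_1,\dots,\ell_K)\in\mathbb N_0^K$ let $F_{\mathcal A_{\boldsymbol\ell}}$ denote the CDF of $\prod_{k=1}^K(1+R_{\boldsymbol\ell,k})$ where $R_{\boldsymbol\ell,1},\dots,R_{\boldsymbol\ell,K}$ are independent with $R_{\boldsymbol\ell,k}\sim\mathcal G(m+\ell_k,\Omega_k)$ (so $F_{\mathcal A_{\boldsymbol\ell}}$ depends on $\gamma$). Then for every fixed $x>1$ and every $\boldsymbol\ell\in\mathbb N_0^K$ with $\boldsymbol\ell\ne\mathbf 0$, $$\lim_{\gamma\to\infty}\frac{F_{\mathcal A_{\boldsymbol\ell}}(x)}{F_{\mathcal A_{\mathbf 0}}(x)}=0,$$ i.e. $F_{\mathcal A_{\boldsymbol\ell}}(x)/F_{\mathcal A_{\mathbf 0}}(x)=o(1)$ as $\gamma\to\infty$.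
   Context: $\mathcal G(a,b)$ denotes the Gamma distribution with shape $a$ and scale $b$ (density $x^{a-1}e^{-x/b}/(\Gamma(a)b^a)$, $x>0$). *)

theory Defs
  imports "HOL-Probability.Probability"
begin

definition gamma_density :: "real \<Rightarrow> real \<Rightarrow> real \<Rightarrow> real" where
  "gamma_density a b x =
     (if x > 0 then x powr (a - 1) * exp (- x / b) / (Gamma a * b powr a) else 0)"

text \<open>Joint law of independent R_0,...,R_{K-1} with R_k ~ Gamma(m + l k, Om k)
  (components indexed by {..<K}).\<close>
definition gamma_prod_law :: "nat \<Rightarrow> nat \<Rightarrow> (nat \<Rightarrow> real) \<Rightarrow> (nat \<Rightarrow> nat) \<Rightarrow> (nat \<Rightarrow> real) measure" where
  "gamma_prod_law K m Om l =
     PiM {..<K} (\<lambda>k. density lborel (\<lambda>r. ennreal (gamma_density (real (m + l k)) (Om k) r)))"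

definition cdf_A :: "nat \<Rightarrow> nat \<Rightarrow> (nat \<Rightarrow> real) \<Rightarrow> (nat \<Rightarrow> nat) \<Rightarrow> real \<Rightarrow> real" where
  "cdf_A K m Om l x =
     measure (gamma_prod_law K m Om l)
       {r \<in> space (gamma_prod_law K m Om l). (\<Prod>k<K. 1 + r k) \<le> x}"

end

theory Submission
  imports Defs
begin

lemma gd_meas[measurable]: "(\<lambda>r. gamma_density a b r) \<in> borel_measurable borel"
  unfolding gamma_density_def by measurable

lemma psf: "product_sigma_finite (\<lambda>k. density lborel (\<lambda>r. ennreal (gamma_density (a k) (b k) r)))"
  unfolding product_sigma_finite_def
proof
  fix k
  show "sigma_finite_measure (density lborel (\<lambda>r. ennreal (gamma_density (a k) (b k) r)))"
    by (subst sigma_finite_measure.sigma_finite_iff_density_finite'[OF sigma_finite_lborel]) auto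
qed

lemma box_meas:
  assumes "\<And>k. k < K \<Longrightarrow> A k \<in> sets borel"
  shows "emeasure (gamma_prod_law K m Om l) (Pi\<^sub>E {..<K} A) =
     (\<Prod>k<K. emeasure (density lborel (\<lambda>r. ennreal (gamma_density (real (m + l k)) (Om k) r))) (A k))"
  unfolding gamma_prod_law_def
  by (rule product_sigma_finite.emeasure_PiM[OF psf]) (use assms in auto)

abbreviation "M1 a b \<equiv> density lborel (\<lambda>r. ennreal (gamma_density a b r))"

lemma gd_up:
  assumes "n \<ge> 1" "b > 0" "0 < r" "r \<le> t"
  shows "gamma_density (real n) b r \<le> t^(n-1) / (Gamma (real n) * b^n)"
proof -
  have G: "Gamma (real n) > 0" using assms by (intro Gamma_real_pos) auto
  have "r powr (real n - 1) = r^(n-1)"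
  proof -
    have e: "real n - 1 = real (n-1)" using assms by (simp add: of_nat_diff)
    show ?thesis unfolding e by (rule powr_realpow) (use assms in linarith)
  qed
  moreover have "b powr real n = b^n" using assms by (simp add: powr_realpow)
  moreover have "r^(n-1) * exp (-r/b) \<le> t^(n-1) * 1"
    using assms by (intro mult_mono power_mono) auto
  ultimately show ?thesis using assms G unfolding gamma_density_def
    by (simp add: divide_right_mono)
qed

lemma gd_low:
  assumes "n \<ge> 1" "b > 0" "0 < s" "s \<le> r" "r \<le> t"
  shows "gamma_density (real n) b r \<ge> s^(n-1) * exp (-t/b) / (Gamma (real n) * b^n)"
proof -
  have G: "Gamma (real n) > 0" using assms by (intro Gamma_real_pos) auto
  have "r powr (real n - 1) = r^(n-1)"
  proof -
    have e: "real n - 1 = real (n-1)" using assms by (simp add: of_nat_diff)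
    show ?thesis unfolding e by (rule powr_realpow) (use assms in linarith)
  qed
  moreover have "b powr real n = b^n" using assms by (simp add: powr_realpow)
  moreover have "s^(n-1) * exp (-t/b) \<le> r^(n-1) * exp (-r/b)"
    using assms by (intro mult_mono power_mono) (auto simp: divide_right_mono)
  ultimately show ?thesis using assms G unfolding gamma_density_def
    by (simp add: divide_right_mono)
qed

lemma em_up:
  assumes "n \<ge> 1" "b > 0" "t \<ge> 0"
  shows "emeasure (M1 (real n) b) {..t} \<le> ennreal (t^n / (Gamma (real n) * b^n))"
proof -
  let ?c = "t^(n-1) / (Gamma (real n) * b^n)"
  have "emeasure (M1 (real n) b) {..t} = (\<integral>\<^sup>+ r. ennreal (gamma_density (real n) b r) * indicator {..t} r \<partial>lborel)"
    by (rule emeasure_density) auto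
  also have "\<dots> \<le> (\<integral>\<^sup>+ r. ennreal ?c * indicator {0..t} r \<partial>lborel)"
  proof (rule nn_integral_mono)
    fix r
    show "ennreal (gamma_density (real n) b r) * indicator {..t} r \<le> ennreal ?c * indicator {0..t} r"
    proof (cases "0 < r \<and> r \<le> t")
      case True
      then show ?thesis using gd_up[OF assms(1,2), of r t] by (auto simp: indicator_def intro!: ennreal_leI)
    next
      case False
      then have "r \<le> 0 \<or> r > t" by auto
      then show ?thesis by (auto simp: indicator_def gamma_density_def)
    qed
  qed
  also have "\<dots> = ennreal ?c * ennreal t"
    using assms by (subst nn_integral_cmult_indicator) auto
  also have "\<dots> = ennreal (?c * t)"
    using assms by (subst ennreal_mult) (auto intro!: divide_nonneg_pos Gamma_real_pos)
  also have "?c * t = t^n / (Gamma (real n) * b^n)"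
    using assms by (cases n) (auto simp: field_simps)
  finally show ?thesis .
qed

lemma em_low:
  assumes "n \<ge> 1" "b > 0" "d > 0"
  shows "emeasure (M1 (real n) b) {d/2..d} \<ge> ennreal ((d/2)^(n-1) * exp (-d/b) / (Gamma (real n) * b^n) * (d/2))"
proof -
  let ?c = "(d/2)^(n-1) * exp (-d/b) / (Gamma (real n) * b^n)"
  have c0: "?c \<ge> 0" using assms by (auto intro!: divide_nonneg_pos Gamma_real_pos)
  have "ennreal (?c * (d/2)) = ennreal ?c * ennreal (d/2)"
    using assms c0 by (subst ennreal_mult) auto
  also have "\<dots> = (\<integral>\<^sup>+ r. ennreal ?c * indicator {d/2..d} r \<partial>lborel)"
    using assms by (subst nn_integral_cmult_indicator) auto
  also have "\<dots> \<le> (\<integral>\<^sup>+ r. ennreal (gamma_density (real n) b r) * indicator {d/2..d} r \<partial>lborel)"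
  proof (rule nn_integral_mono)
    fix r
    show "ennreal ?c * indicator {d/2..d} r \<le> ennreal (gamma_density (real n) b r) * indicator {d/2..d} r"
    proof (cases "d/2 \<le> r \<and> r \<le> d")
      case True
      then show ?thesis using gd_low[OF assms(1,2), of "d/2" r d] assms by (auto simp: indicator_def intro!: ennreal_leI)
    next
      case False
      then show ?thesis by (auto simp: indicator_def)
    qed
  qed
  also have "\<dots> = emeasure (M1 (real n) b) {d/2..d}"
    by (rule emeasure_density[symmetric]) auto
  finally show ?thesis .
qed

lemma em_neg:
  "emeasure (M1 a b) {..<0} = 0"
proof -
  have "emeasure (M1 a b) {..<0} = (\<integral>\<^sup>+ r. ennreal (gamma_density a b r) * indicator {..<0} r \<partial>lborel)"
    by (rule emeasure_density) auto
  also have "(\<lambda>r. ennreal (gamma_density a b r) * indicator {..<0} r) = (\<lambda>r. 0)"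
    by (auto simp: fun_eq_iff indicator_def gamma_density_def)
  finally show ?thesis by simp
qed

lemma space_P: "space (gamma_prod_law K m Om l) = Pi\<^sub>E {..<K} (\<lambda>_. UNIV)"
  unfolding gamma_prod_law_def by (simp add: space_PiM)

lemma sets_P: "sets (gamma_prod_law K m Om l) = sets (PiM {..<K} (\<lambda>_. borel :: real measure))"
  unfolding gamma_prod_law_def by (intro sets_PiM_cong) auto

lemma AE_nonneg:
  "AE r in gamma_prod_law K m Om l. \<forall>k\<in>{..<K}. 0 \<le> r k"
proof (rule eventually_ball_finite)
  show "finite {..<K}" by simp
  show "\<forall>k\<in>{..<K}. AE r in gamma_prod_law K m Om l. 0 \<le> r k"
  proof
    fix k assume k: "k \<in> {..<K}"
    let ?N = "Pi\<^sub>E {..<K} (\<lambda>j. if j = k then {..<0} else (UNIV::real set))"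
    have N: "?N \<in> sets (gamma_prod_law K m Om l)"
      unfolding sets_P by (rule sets_PiM_I_finite) auto
    have "{r \<in> space (gamma_prod_law K m Om l). \<not> 0 \<le> r k} = ?N"
      using k unfolding space_P by (auto simp: PiE_def Pi_def)
    moreover have "emeasure (gamma_prod_law K m Om l) ?N = 0"
      using k by (subst box_meas) (auto intro!: prod_zero bexI[of _ k] simp: em_neg)
    ultimately show "AE r in gamma_prod_law K m Om l. 0 \<le> r k"
      using N by (subst AE_iff_measurable) auto
  qed
qed

lemma event_sets: "{r \<in> space (gamma_prod_law K m Om l). (\<Prod>k<K. 1 + r k) \<le> x} \<in> sets (gamma_prod_law K m Om l)"
proof -
  have "(\<lambda>r. \<Prod>k<K. 1 + r k) \<in> borel_measurable (PiM {..<K} (\<lambda>_. borel :: real measure))"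
    by measurable
  then have "(\<lambda>r. \<Prod>k<K. 1 + r k) \<in> borel_measurable (gamma_prod_law K m Om l)"
    by (subst measurable_cong_sets[OF sets_P refl])
  then show ?thesis by measurable
qed

lemma em_num_up:
  assumes "\<forall>k<K. Om k > 0" "x > 1" "m \<ge> 1"
  shows "emeasure (gamma_prod_law K m Om l) {r \<in> space (gamma_prod_law K m Om l). (\<Prod>k<K. 1 + r k) \<le> x}
     \<le> ennreal (\<Prod>k<K. (x-1)^(m + l k) / (Gamma (real (m + l k)) * Om k^(m + l k)))"
proof -
  let ?P = "gamma_prod_law K m Om l"
  let ?B = "Pi\<^sub>E {..<K} (\<lambda>_. {..x-1})"
  have B: "?B \<in> sets ?P" unfolding sets_P by (rule sets_PiM_I_finite) auto
  have "emeasure ?P {r \<in> space ?P. (\<Prod>k<K. 1 + r k) \<le> x} \<le> emeasure ?P ?B"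
  proof (rule emeasure_mono_AE[OF _ B])
    show "AE r in ?P. r \<in> {r \<in> space ?P. (\<Prod>k<K. 1 + r k) \<le> x} \<longrightarrow> r \<in> ?B"
      using AE_nonneg[of K m Om l]
    proof eventually_elim
      case (elim r)
      show ?case
      proof
        assume r: "r \<in> {r \<in> space ?P. (\<Prod>k<K. 1 + r k) \<le> x}"
        show "r \<in> ?B"
          unfolding PiE_iff
        proof (intro conjI ballI)
          fix j assume j: "j \<in> {..<K}"
          have "(\<Prod>k<K. 1 + r k) = (1 + r j) * (\<Prod>k\<in>{..<K}-{j}. 1 + r k)"
            using j by (simp add: prod.remove)
          moreover have "1 \<le> (\<Prod>k\<in>{..<K}-{j}. 1 + r k)"
            using elim by (intro prod_ge_1) auto
          moreover have "0 \<le> r j" using elim j by auto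
          ultimately have "1 + r j \<le> (\<Prod>k<K. 1 + r k)"
            by (metis mult_le_cancel_left1 add_increasing2 zero_le_one not_le)
          then show "r j \<in> {..x-1}" using r by auto
        next
          show "r \<in> extensional {..<K}" using r unfolding space_P by (auto simp: PiE_def)
        qed
      qed
    qed
  qed
  also have "emeasure ?P ?B = (\<Prod>k<K. emeasure (M1 (real (m + l k)) (Om k)) {..x-1})"
    by (rule box_meas) auto
  also have "\<dots> \<le> (\<Prod>k<K. ennreal ((x-1)^(m + l k) / (Gamma (real (m + l k)) * Om k^(m + l k))))"
    using assms by (intro prod_mono_ennreal em_up) auto
  also have "\<dots> = ennreal (\<Prod>k<K. (x-1)^(m + l k) / (Gamma (real (m + l k)) * Om k^(m + l k)))"
    using assms by (intro prod_ennreal) (auto intro!: divide_nonneg_pos Gamma_real_pos)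
  finally show ?thesis .
qed

lemma cdf_up:
  assumes "\<forall>k<K. Om k > 0" "x > 1" "m \<ge> 1"
  shows "cdf_A K m Om l x \<le> (\<Prod>k<K. (x-1)^(m + l k) / (Gamma (real (m + l k)) * Om k^(m + l k)))"
proof -
  let ?c = "(\<Prod>k<K. (x-1)^(m + l k) / (Gamma (real (m + l k)) * Om k^(m + l k)))"
  have c0: "?c \<ge> 0" using assms by (intro prod_nonneg) (auto intro!: divide_nonneg_pos Gamma_real_pos)
  have "cdf_A K m Om l x \<le> enn2real (ennreal ?c)"
    unfolding cdf_A_def measure_def
    by (rule enn2real_mono[OF em_num_up[OF assms]]) simp
  then show ?thesis using c0 by simp
qed

lemma cdf_low:
  assumes "\<forall>k<K. Om k > 0" "x > 1" "m \<ge> 1" "K \<ge> 1"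
  defines "d \<equiv> root K x - 1"
  shows "cdf_A K m Om (\<lambda>_. 0) x \<ge> (\<Prod>k<K. (d/2)^(m-1) * exp (-d/Om k) / (Gamma (real m) * Om k^m) * (d/2))"
proof -
  let ?P = "gamma_prod_law K m Om (\<lambda>_. 0)"
  let ?E = "{r \<in> space ?P. (\<Prod>k<K. 1 + r k) \<le> x}"
  let ?B = "Pi\<^sub>E {..<K} (\<lambda>_. {d/2..d})"
  let ?c = "(\<Prod>k<K. (d/2)^(m-1) * exp (-d/Om k) / (Gamma (real m) * Om k^m) * (d/2))"
  have d: "d > 0" unfolding d_def using assms by (simp add: real_root_gt_1_iff)
  have rx: "(1 + d)^K = x" unfolding d_def using assms by (simp add: real_root_pow_pos)
  have c0: "?c \<ge> 0" using assms d by (intro prod_nonneg) (auto intro!: mult_nonneg_nonneg divide_nonneg_pos Gamma_real_pos)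
  have BE: "?B \<subseteq> ?E"
  proof
    fix r assume r: "r \<in> ?B"
    have "(\<Prod>k<K. 1 + r k) \<le> (\<Prod>k<K. 1 + d)"
      proof (rule prod_mono)
      fix i assume i: "i \<in> {..<K}"
      have "d/2 \<le> r i \<and> r i \<le> d" using r i by (auto simp: PiE_iff)
      then show "0 \<le> 1 + r i \<and> 1 + r i \<le> 1 + d" using d by linarith
    qed
    also have "\<dots> = x" using rx by simp
    finally show "r \<in> ?E" using r unfolding space_P by (auto simp: PiE_iff)
  qed
  have "ennreal ?c = (\<Prod>k<K. ennreal ((d/2)^(m-1) * exp (-d/Om k) / (Gamma (real m) * Om k^m) * (d/2)))"
    using assms d by (intro prod_ennreal[symmetric]) (auto intro!: mult_nonneg_nonneg divide_nonneg_pos Gamma_real_pos)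
  also have "\<dots> \<le> (\<Prod>k<K. emeasure (M1 (real m) (Om k)) {d/2..d})"
    using assms d by (intro prod_mono_ennreal em_low) auto
  also have "\<dots> = emeasure ?P ?B"
    by (subst box_meas) auto
  also have "\<dots> \<le> emeasure ?P ?E"
    by (rule emeasure_mono[OF BE event_sets])
  finally have le: "ennreal ?c \<le> emeasure ?P ?E" .
  have fin: "emeasure ?P ?E < top"
    using em_num_up[OF assms(1-3), of "\<lambda>_. 0"] by (auto simp: le_less_trans)
  have "enn2real (ennreal ?c) \<le> enn2real (emeasure ?P ?E)"
    by (rule enn2real_mono[OF le fin])
  then show ?thesis using c0 unfolding cdf_A_def measure_def by simp
qed

theorem lemma2:
  fixes K m :: nat and sigma2 lam theta :: "nat \<Rightarrow> real" and l :: "nat \<Rightarrow> nat" and x :: real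
  assumes "K \<ge> 1" and "m \<ge> 1"
    and "\<forall>k<K. sigma2 k > 0"
    and "\<forall>k<K. 0 \<le> lam k \<and> lam k < 1"
    and "\<forall>k<K. theta k > 0"
    and "(\<Sum>k<K. theta k) = 1"
    and "x > 1"
    and "\<exists>k<K. l k \<noteq> 0"
  shows "((\<lambda>\<gamma>::real.
            cdf_A K m (\<lambda>k. \<gamma> * theta k * sigma2 k * (1 - (lam k)\<^sup>2) / real m) l x /
            cdf_A K m (\<lambda>k. \<gamma> * theta k * sigma2 k * (1 - (lam k)\<^sup>2) / real m) (\<lambda>_. 0) x)
          \<longlongrightarrow> 0) at_top"
proof -
  define c where "c k = theta k * sigma2 k * (1 - (lam k)\<^sup>2) / real m" for k
  define d where "d = root K x - 1"
  define n where "n k = m + l k" for k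
  define L where "L = (\<Sum>k<K. l k)"
  define U where "U = (\<Prod>k<K. (x-1)^(n k) / (Gamma (real (n k)) * c k^(n k)))"
  define E where "E k = (d/2)^(m-1) * exp (-d/c k) / (Gamma (real m) * c k^m) * (d/2)" for k
  define D where "D = (\<Prod>k<K. E k)"
  have c: "c k > 0" if "k < K" for k
  proof -
    have "(lam k)\<^sup>2 < 1" using assms(4) that by (simp add: power_less_one_iff abs_square_less_1)
    then show ?thesis unfolding c_def using assms that by (auto intro!: divide_pos_pos mult_pos_pos)
  qed
  have d: "d > 0" unfolding d_def using assms by (simp add: real_root_gt_1_iff)
  have L: "L \<ge> 1"
  proof -
    obtain j where j: "j < K" "l j \<noteq> 0" using assms(8) by auto
    have "l j \<le> L" unfolding L_def using j by (intro member_le_sum) auto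
    then show ?thesis using j by simp
  qed
  have U: "U \<ge> 0" unfolding U_def using c assms
    by (intro prod_nonneg) (auto intro!: divide_nonneg_pos Gamma_real_pos simp: n_def)
  have E: "E k > 0" if "k < K" for k unfolding E_def using c[OF that] d assms
    by (auto intro!: mult_pos_pos divide_pos_pos Gamma_real_pos)
  have D: "D > 0" unfolding D_def using E by (intro prod_pos) auto
  have bound: "cdf_A K m (\<lambda>k. g * theta k * sigma2 k * (1 - (lam k)\<^sup>2) / real m) l x /
            cdf_A K m (\<lambda>k. g * theta k * sigma2 k * (1 - (lam k)\<^sup>2) / real m) (\<lambda>_. 0) x
         \<le> (U / D) * inverse g \<and>
         0 \<le> cdf_A K m (\<lambda>k. g * theta k * sigma2 k * (1 - (lam k)\<^sup>2) / real m) l x /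
            cdf_A K m (\<lambda>k. g * theta k * sigma2 k * (1 - (lam k)\<^sup>2) / real m) (\<lambda>_. 0) x"
    if g: "g \<ge> 1" for g
  proof -
    have Om: "(\<lambda>k. g * theta k * sigma2 k * (1 - (lam k)\<^sup>2) / real m) = (\<lambda>k. g * c k)"
      unfolding c_def by (auto simp: fun_eq_iff)
    have Omp: "\<forall>k<K. g * c k > 0" using c g by auto
    have num: "cdf_A K m (\<lambda>k. g * c k) l x \<le> U / g ^ (K*m + L)"
    proof -
      have "cdf_A K m (\<lambda>k. g * c k) l x \<le> (\<Prod>k<K. (x-1)^(n k) / (Gamma (real (n k)) * (g * c k)^(n k)))"
        using cdf_up[OF Omp assms(7,2), of l] unfolding n_def by simp
      also have "\<dots> = (\<Prod>k<K. ((x-1)^(n k) / (Gamma (real (n k)) * c k^(n k))) / g^(n k))"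
        by (intro prod.cong refl) (simp add: power_mult_distrib field_simps)
      also have "\<dots> = U / (\<Prod>k<K. g^(n k))"
        unfolding U_def by (rule prod_dividef)
      also have "(\<Prod>k<K. g^(n k)) = g ^ (\<Sum>k<K. n k)"
        by (simp add: power_sum)
      also have "(\<Sum>k<K. n k) = K*m + L"
        unfolding n_def L_def by (simp add: sum.distrib)
      finally show ?thesis .
    qed
    have den: "cdf_A K m (\<lambda>k. g * c k) (\<lambda>_. 0) x \<ge> D / g ^ (K*m)"
    proof -
      have "D / g^(K*m) = (\<Prod>k<K. E k / g^m)"
        unfolding D_def by (simp add: prod_dividef flip: power_mult) (simp add: mult.commute)
      also have "\<dots> \<le> (\<Prod>k<K. (d/2)^(m-1) * exp (-d/(g * c k)) / (Gamma (real m) * (g * c k)^m) * (d/2))"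
      proof (rule prod_mono)
        fix k assume k: "k \<in> {..<K}"
        have ck: "c k > 0" using c k by auto
        have "d / (g * c k) \<le> d / c k" using ck g d
          by (intro divide_left_mono) (auto simp: mult_pos_pos)
        then have ex: "exp (-d/c k) \<le> exp (-d/(g * c k))" by simp
        have "E k / g^m = (d/2)^(m-1) * exp (-d/c k) / (Gamma (real m) * (g * c k)^m) * (d/2)"
          unfolding E_def by (simp add: power_mult_distrib field_simps)
        also have "\<dots> \<le> (d/2)^(m-1) * exp (-d/(g * c k)) / (Gamma (real m) * (g * c k)^m) * (d/2)"
          using ex d ck g assms
          by (intro mult_right_mono divide_right_mono mult_left_mono)
             (auto intro!: mult_nonneg_nonneg Gamma_real_pos less_imp_le[OF Gamma_real_pos])
        finally show "0 \<le> E k / g^m \<and> E k / g^m \<le> (d/2)^(m-1) * exp (-d/(g * c k)) / (Gamma (real m) * (g * c k)^m) * (d/2)"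
          using E[of k] k g by auto
      qed
      also have "\<dots> \<le> cdf_A K m (\<lambda>k. g * c k) (\<lambda>_. 0) x"
        using cdf_low[OF Omp assms(7,2,1)] unfolding d_def by simp
      finally show ?thesis .
    qed
    have Dg: "D / g^(K*m) > 0" using D g by simp
    have nn: "0 \<le> cdf_A K m (\<lambda>k. g * c k) l x" unfolding cdf_A_def by simp
    have "cdf_A K m (\<lambda>k. g * c k) l x / cdf_A K m (\<lambda>k. g * c k) (\<lambda>_. 0) x \<le> (U / g ^ (K*m + L)) / (D / g^(K*m))"
      using num den Dg nn by (intro frac_le) auto
    also have "\<dots> = (U / D) / g^L"
      using g D by (simp add: power_add field_simps)
    also have "\<dots> \<le> (U / D) / g"
    proof -
      have "g^1 \<le> g^L" using g L by (intro power_increasing) auto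
      then show ?thesis using U D g by (intro divide_left_mono) auto
    qed
    finally have 1: "cdf_A K m (\<lambda>k. g * c k) l x / cdf_A K m (\<lambda>k. g * c k) (\<lambda>_. 0) x \<le> (U / D) * inverse g"
      by (simp add: divide_inverse)
    have 2: "0 \<le> cdf_A K m (\<lambda>k. g * c k) l x / cdf_A K m (\<lambda>k. g * c k) (\<lambda>_. 0) x"
      using nn den Dg by auto
    show ?thesis unfolding Om using 1 2 by auto
  qed
  show ?thesis
  proof (rule tendsto_sandwich[of "\<lambda>_. 0" _ _ "\<lambda>g. (U / D) * inverse g"])
    show "\<forall>\<^sub>F g in at_top. 0 \<le> cdf_A K m (\<lambda>k. g * theta k * sigma2 k * (1 - (lam k)\<^sup>2) / real m) l x /
            cdf_A K m (\<lambda>k. g * theta k * sigma2 k * (1 - (lam k)\<^sup>2) / real m) (\<lambda>_. 0) x"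
      using eventually_ge_at_top[of "1::real"] by eventually_elim (use bound in blast)
    show "\<forall>\<^sub>F g in at_top. cdf_A K m (\<lambda>k. g * theta k * sigma2 k * (1 - (lam k)\<^sup>2) / real m) l x /
            cdf_A K m (\<lambda>k. g * theta k * sigma2 k * (1 - (lam k)\<^sup>2) / real m) (\<lambda>_. 0) x \<le> (U / D) * inverse g"
      using eventually_ge_at_top[of "1::real"] by eventually_elim (use bound in blast)
    show "((\<lambda>_. 0) \<longlongrightarrow> (0::real)) at_top" by simp
    show "((\<lambda>g. (U / D) * inverse g) \<longlongrightarrow> 0) at_top"
      by (rule tendsto_mult_right_zero[OF tendsto_inverse_0_at_top[OF filterlim_ident]])
  qed
qed

end
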